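(* Let $n\geq 2$ and consider the clustered graph of overlapping $n$-permutations. For every cluster $Y$ there exists a unique cluster $X$ such that there are exactly two (parallel) edges from $X$ to $Y$.
   Context: An $n$-permutation is a permutation $\pi_1\cdots\pi_n$ of $\{1,\ldots,n\}$. For a word $w$ of distinct numbers, $\mathrm{red}(w)$ is the permutation obtained by replacing the $i$-th smallest letter by $i$. For an $(n-1)$-permutation $\tau$, the cluster with signature $\tau$ is the set of all $n$-permutations $\pi$ with $\mathrm{red}(\pi_1\cdots\pi_{n-1})=\tau$. The clustered graph of overlapping $n$-permutations is the directed multigraph (loops allowed) whose vertices are the $(n-1)!$ clusters and in which every $n$-permutation $\pi$ contributes exactly one edge, going from the cluster containing $\pi$ to the cluster with signature $\mathrm{red}(\pi_2\cdots\pi_n)$. *)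

theory Defs
  imports Main
begin

definition perms :: "nat \<Rightarrow> nat list set" where
  "perms n = {p. distinct p \<and> set p = {1..n}}"

definition red :: "nat list \<Rightarrow> nat list" where
  "red w = map (\<lambda>x. card {y \<in> set w. y \<le> x}) w"

definition cluster :: "nat \<Rightarrow> nat list \<Rightarrow> nat list set" where
  "cluster n \<tau> = {\<pi> \<in> perms n. red (butlast \<pi>) = \<tau>}"

definition clusters :: "nat \<Rightarrow> nat list set set" where
  "clusters n = cluster n ` perms (n - 1)"

text \<open>Edge contributed by pi: from the cluster containing pi to the cluster
  with signature red(pi_2 ... pi_n).\<close>
definition edge_src :: "nat \<Rightarrow> nat list \<Rightarrow> nat list set" where
  "edge_src n \<pi> = cluster n (red (butlast \<pi>))"

definition edge_tgt :: "nat \<Rightarrow> nat list \<Rightarrow> nat list set" where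
  "edge_tgt n \<pi> = cluster n (red (tl \<pi>))"

definition num_edges :: "nat \<Rightarrow> nat list set \<Rightarrow> nat list set \<Rightarrow> nat" where
  "num_edges n X Y = card {\<pi> \<in> perms n. edge_src n \<pi> = X \<and> edge_tgt n \<pi> = Y}"

end

theory Submission
  imports Defs
begin

definition sh :: "nat \<Rightarrow> nat \<Rightarrow> nat" where
  "sh a x = (if x < a then x else Suc x)"

definition ins :: "nat \<Rightarrow> nat list \<Rightarrow> nat list" where
  "ins a t = a # map (sh a) t"

lemma red_mono:
  assumes "strict_mono_on (set w) h"
  shows "red (map h w) = red w"
  unfolding red_def
proof (simp only: map_map o_def set_map, rule map_cong[OF refl])
  fix x assume x: "x \<in> set w"
  have "{y \<in> h ` set w. y \<le> h x} = h ` {y \<in> set w. y \<le> x}"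
    using strict_mono_on_less_eq[OF assms _ x] x by auto
  moreover have "inj_on h {y \<in> set w. y \<le> x}"
    using strict_mono_on_imp_inj_on[OF assms] by (rule inj_on_subset) auto
  ultimately show "card {y \<in> h ` set w. y \<le> h x} = card {y \<in> set w. y \<le> x}"
    by (simp add: card_image)
qed

lemma red_perm:
  assumes "t \<in> perms m" shows "red t = t"
proof -
  have "\<And>x. x \<in> set t \<Longrightarrow> card {y \<in> set t. y \<le> x} = x"
  proof -
    fix x assume "x \<in> set t"
    hence "{y \<in> set t. y \<le> x} = {1..x}" using assms by (auto simp: perms_def)
    thus "card {y \<in> set t. y \<le> x} = x" by simp
  qed
  thus ?thesis unfolding red_def by (simp add: map_idI)
qed

lemma red_in_perms:
  assumes "distinct w" shows "red w \<in> perms (length w)"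
proof -
  define k where "k = length w"
  define r where "r = (\<lambda>x. card {y \<in> set w. y \<le> x})"
  have ck: "card (set w) = k" using assms by (simp add: distinct_card k_def)
  have sm: "strict_mono_on (set w) r"
  proof (rule strict_mono_onI)
    fix x x' assume a: "x \<in> set w" "x' \<in> set w" "x < x'"
    have "x' \<in> {y \<in> set w. y \<le> x'}" "x' \<notin> {y \<in> set w. y \<le> x}" using a by auto
    moreover have "{y \<in> set w. y \<le> x} \<subseteq> {y \<in> set w. y \<le> x'}" using a by auto
    ultimately have "{y \<in> set w. y \<le> x} \<subset> {y \<in> set w. y \<le> x'}" by blast
    thus "r x < r x'" unfolding r_def by (rule psubset_card_mono[rotated]) simp
  qed
  have rng: "r ` set w \<subseteq> {1..k}"
  proof
    fix z assume "z \<in> r ` set w"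
    then obtain x where x: "x \<in> set w" "z = r x" by auto
    have "{y \<in> set w. y \<le> x} \<noteq> {}" using x by auto
    hence "1 \<le> r x" unfolding r_def by (simp add: Suc_leI card_gt_0_iff)
    moreover have "card {y \<in> set w. y \<le> x} \<le> card (set w)" by (rule card_mono) auto
    hence "r x \<le> k" unfolding r_def using ck by simp
    ultimately show "z \<in> {1..k}" using x by auto
  qed
  have "card (r ` set w) = k" using strict_mono_on_imp_inj_on[OF sm] ck by (simp add: card_image)
  hence "r ` set w = {1..k}" using rng by (intro card_subset_eq) auto
  moreover have "distinct (map r w)" using assms strict_mono_on_imp_inj_on[OF sm] by (simp add: distinct_map)
  ultimately show ?thesis unfolding perms_def red_def k_def[symmetric] r_def[symmetric] by simp
qed

lemma perms_len: "p \<in> perms n \<Longrightarrow> length p = n"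
  unfolding perms_def using distinct_card by fastforce

lemma sh_strict: "strict_mono (sh a)"
  by (rule strict_monoI) (auto simp: sh_def)

lemma sh_ne: "sh a x \<noteq> a"
  by (auto simp: sh_def)

lemma sh_image: "a \<in> {1..Suc m} \<Longrightarrow> sh a ` {1..m} = {1..Suc m} - {a}"
proof (rule set_eqI)
  fix y assume a: "a \<in> {1..Suc m}"
  show "y \<in> sh a ` {1..m} \<longleftrightarrow> y \<in> {1..Suc m} - {a}"
  proof
    assume "y \<in> sh a ` {1..m}" thus "y \<in> {1..Suc m} - {a}" using a by (auto simp: sh_def)
  next
    assume y: "y \<in> {1..Suc m} - {a}"
    show "y \<in> sh a ` {1..m}"
    proof (cases "y < a")
      case True
      hence "sh a y = y" "y \<in> {1..m}" using a y by (auto simp: sh_def)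
      thus ?thesis by (metis imageI)
    next
      case False
      hence "sh a (y - 1) = y" "y - 1 \<in> {1..m}" using a y by (auto simp: sh_def)
      thus ?thesis by (metis imageI)
    qed
  qed
qed

lemma ins_perm:
  assumes t: "t \<in> perms m" and a: "a \<in> {1..Suc m}"
  shows "ins a t \<in> perms (Suc m)"
proof -
  have "distinct (map (sh a) t)" using t strict_mono_on_imp_inj_on[OF sh_strict]
    by (auto simp: perms_def distinct_map intro: inj_on_subset)
  moreover have "set (map (sh a) t) = {1..Suc m} - {a}" using t sh_image[OF a] by (simp add: perms_def)
  moreover have "insert a ({1..Suc m} - {a}) = {1..Suc m}" using a by blast
  moreover have "a \<notin> set (map (sh a) t)" using sh_ne[of a] by (simp only: set_map) (metis imageE)
  ultimately have "distinct (a # map (sh a) t) \<and> set (a # map (sh a) t) = {1..Suc m}"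
    by (simp only: distinct.simps list.set) blast
  thus ?thesis unfolding ins_def perms_def mem_Collect_eq .
qed

lemma ins_tl: assumes "t \<in> perms m" shows "red (tl (ins a t)) = t"
proof -
  have "strict_mono_on (set t) (sh a)" using sh_strict by (simp add: strict_mono_on_def strict_mono_def)
  hence "red (map (sh a) t) = red t" by (rule red_mono)
  thus ?thesis using red_perm[OF assms] by (simp add: ins_def)
qed

lemma ins_surj:
  assumes p: "p \<in> perms (Suc m)" and r: "red (tl p) = t"
  shows "p = ins (hd p) t" "hd p \<in> {1..Suc m}"
proof -
  obtain a w where pw: "p = a # w" using perms_len[OF p] by (cases p) auto
  have dw: "distinct w" and aw: "a \<notin> set w" and sw: "set w = {1..Suc m} - {a}" and a: "a \<in> {1..Suc m}"
    using p pw by (auto simp: perms_def)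
  have "\<And>x. x \<in> set w \<Longrightarrow> sh a (card {y \<in> set w. y \<le> x}) = x"
  proof -
    fix x assume x: "x \<in> set w"
    have xl: "x \<le> Suc m" using x sw by simp
    have e: "{y \<in> set w. y \<le> x} = {1..x} - {a}" unfolding sw using xl by (rule_tac set_eqI) (simp, linarith)
    show "sh a (card {y \<in> set w. y \<le> x}) = x"
    proof (cases "x < a")
      case True
      hence "{1..x} - {a} = {1..x}" by auto
      thus ?thesis using e True by (simp add: sh_def)
    next
      case False
      hence "a \<le> x" "x \<noteq> a" using x aw by auto
      hence "card ({1..x} - {a}) = x - 1" using a by (simp add: card_Diff_singleton)
      thus ?thesis using e False \<open>a \<le> x\<close> \<open>x \<noteq> a\<close> by (simp add: sh_def)
    qed
  qed
  hence "map (sh a) (red w) = w" unfolding red_def by (simp add: map_idI)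
  moreover have "red w = t" using r pw by simp
  ultimately show "p = ins (hd p) t" using pw by (simp add: ins_def)
  show "hd p \<in> {1..Suc m}" using a pw by simp
qed

lemma set_butlast_distinct:
  assumes "distinct xs" "xs \<noteq> []"
  shows "set (butlast xs) = set xs - {last xs}"
proof -
  have "xs = butlast xs @ [last xs]" using assms by simp
  hence "distinct (butlast xs @ [last xs])" using assms by metis
  hence "last xs \<notin> set (butlast xs)" by simp
  moreover have "set xs = insert (last xs) (set (butlast xs))"
    using \<open>xs = butlast xs @ [last xs]\<close> by (metis Un_insert_right append_Nil2 list.simps(15) set_append)
  ultimately show ?thesis by auto
qed

lemma hd_f:
  assumes t: "t \<in> perms m" and m: "1 \<le> m" and a: "a \<in> {1..Suc m}"
  shows "hd (red (butlast (ins a t))) = (if a \<le> last t then a else a - 1)"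
proof -
  define q where "q = ins a t"
  have q: "q \<in> perms (Suc m)" using ins_perm[OF t a] q_def by simp
  have tne: "t \<noteq> []" using perms_len[OF t] m by auto
  have bq: "butlast q = a # butlast (map (sh a) t)" using tne by (simp add: q_def ins_def)
  have lq: "last q = sh a (last t)" using tne by (simp add: q_def ins_def last_map)
  have sb: "set (butlast q) = {1..Suc m} - {sh a (last t)}"
    using set_butlast_distinct[of q] q lq by (simp add: perms_def q_def ins_def)
  have c: "last t \<in> {1..m}" using t tne by (auto simp: perms_def)
  have h: "hd (red (butlast q)) = card {y \<in> set (butlast q). y \<le> a}"
    unfolding red_def bq by simp
  show ?thesis
  proof (cases "a \<le> last t")
    case True
    hence "{y \<in> set (butlast q). y \<le> a} = {1..a}" unfolding sb using a by (auto simp: sh_def)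
    thus ?thesis using h True q_def by simp
  next
    case False
    hence e: "{y \<in> set (butlast q). y \<le> a} = {1..a} - {last t}" unfolding sb using a by (auto simp: sh_def)
    have "card ({1..a} - {last t}) = a - 1" using False c by (simp add: card_Diff_singleton)
    thus ?thesis using h False q_def e by simp
  qed
qed

lemma f_eq:
  assumes t: "t \<in> perms m" and m: "1 \<le> m"
  shows "red (butlast (ins (last t) t)) = red (butlast (ins (Suc (last t)) t))"
proof -
  define c where "c = last t"
  define bt where "bt = butlast t"
  have tne: "t \<noteq> []" using perms_len[OF t] m by auto
  have tt: "t = bt @ [c]" using tne by (simp add: bt_def c_def)
  have cb: "c \<notin> set bt" using t tt by (auto simp: perms_def)
  define L where "L = map (sh c) bt"
  have b1: "butlast (ins c t) = c # L" by (simp add: ins_def tt L_def butlast_append)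
  have "map (sh (Suc c)) bt = L" unfolding L_def using cb
    by (auto simp: sh_def) (metis less_SucE)
  hence b2: "butlast (ins (Suc c) t) = Suc c # L" by (simp add: ins_def tt butlast_append)
  have cL: "c \<notin> set L" "Suc c \<notin> set L" using cb by (auto simp: L_def sh_def)
  define h where "h = (\<lambda>x. if x = c then Suc c else x)"
  have "map h (c # L) = Suc c # L" using cL unfolding h_def
    by (simp, intro map_idI) auto
  moreover have "strict_mono_on (set (c # L)) h"
  proof (rule strict_mono_onI)
    fix x y assume xy: "x \<in> set (c # L)" "y \<in> set (c # L)" "x < y"
    show "h x < h y"
    proof (cases "x = c")
      case True
      hence "y \<in> set L" "y > c" using xy by auto
      hence "y > Suc c" using cL by (metis Suc_lessI)
      thus ?thesis using True xy by (simp add: h_def)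
    next
      case False
      thus ?thesis using xy by (auto simp: h_def)
    qed
  qed
  ultimately have "red (Suc c # L) = red (c # L)" using red_mono by metis
  thus ?thesis using b1 b2 c_def by simp
qed

lemma cluster_inj:
  assumes s: "s \<in> perms m" and s': "s' \<in> perms m" and e: "cluster (Suc m) s = cluster (Suc m) s'"
  shows "s = s'"
proof -
  have "s @ [Suc m] \<in> perms (Suc m)" using s by (auto simp: perms_def)
  hence "s @ [Suc m] \<in> cluster (Suc m) s" using red_perm[OF s] by (simp add: cluster_def)
  hence "s @ [Suc m] \<in> cluster (Suc m) s'" using e by simp
  hence "red s = s'" by (simp add: cluster_def)
  thus ?thesis using red_perm[OF s] by simp
qed

lemma red_bl: "p \<in> perms (Suc m) \<Longrightarrow> red (butlast p) \<in> perms m"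
  using red_in_perms[of "butlast p"] perms_len[of p] by (simp add: perms_def distinct_butlast)

lemma red_tl: "p \<in> perms (Suc m) \<Longrightarrow> red (tl p) \<in> perms m"
  using red_in_perms[of "tl p"] perms_len[of p] by (simp add: perms_def distinct_tl)

lemma edges_eq:
  assumes s: "s \<in> perms m" and t: "t \<in> perms m"
  shows "num_edges (Suc m) (cluster (Suc m) s) (cluster (Suc m) t)
         = card {a \<in> {1..Suc m}. red (butlast (ins a t)) = s}"
proof -
  have "{p \<in> perms (Suc m). edge_src (Suc m) p = cluster (Suc m) s \<and> edge_tgt (Suc m) p = cluster (Suc m) t}
      = {p \<in> perms (Suc m). red (butlast p) = s \<and> red (tl p) = t}"
    using cluster_inj[OF red_bl s] cluster_inj[OF red_tl t]
    unfolding edge_src_def edge_tgt_def by blast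
  also have "\<dots> = (\<lambda>a. ins a t) ` {a \<in> {1..Suc m}. red (butlast (ins a t)) = s}"
  proof (rule set_eqI, rule iffI)
    fix p assume "p \<in> {p \<in> perms (Suc m). red (butlast p) = s \<and> red (tl p) = t}"
    hence p: "p \<in> perms (Suc m)" "red (butlast p) = s" "red (tl p) = t" by auto
    note ins_surj[OF p(1) p(3)]
    thus "p \<in> (\<lambda>a. ins a t) ` {a \<in> {1..Suc m}. red (butlast (ins a t)) = s}"
      using p(2) by (metis (mono_tags, lifting) imageI mem_Collect_eq)
  next
    fix p assume "p \<in> (\<lambda>a. ins a t) ` {a \<in> {1..Suc m}. red (butlast (ins a t)) = s}"
    then obtain a where a: "a \<in> {1..Suc m}" "red (butlast (ins a t)) = s" "p = ins a t" by auto
    thus "p \<in> {p \<in> perms (Suc m). red (butlast p) = s \<and> red (tl p) = t}"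
      using ins_perm[OF t a(1)] ins_tl[OF t] by simp
  qed
  finally show ?thesis unfolding num_edges_def
    by (simp add: card_image inj_on_def ins_def)
qed

theorem lemma3:
  fixes n :: nat and Y :: "nat list set"
  assumes "n \<ge> 2" and "Y \<in> clusters n"
  shows "\<exists>!X. X \<in> clusters n \<and> num_edges n X Y = 2"
proof -
  obtain m where n: "n = Suc m" and m: "1 \<le> m" using assms(1) by (metis Suc_le_D Suc_le_mono one_add_one plus_1_eq_Suc)
  obtain t where t: "t \<in> perms m" and Y: "Y = cluster n t" using assms(2) n by (auto simp: clusters_def)
  define f where "f a = red (butlast (ins a t))" for a
  define c where "c = last t"
  have tne: "t \<noteq> []" using perms_len[OF t] m by auto
  have c: "c \<in> {1..m}" using t tne by (auto simp: perms_def c_def)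
  have fc: "f (Suc c) = f c" using f_eq[OF t m] by (simp add: f_def c_def)
  have hd: "\<And>a. a \<in> {1..Suc m} \<Longrightarrow> hd (f a) = (if a \<le> c then a else a - 1)"
    using hd_f[OF t m] by (simp add: f_def c_def)
  have fperm: "\<And>a. a \<in> {1..Suc m} \<Longrightarrow> f a \<in> perms m"
    using red_bl ins_perm[OF t] by (simp add: f_def)
  have key: "\<And>a a'. a \<in> {1..Suc m} \<Longrightarrow> a' \<in> {1..Suc m} \<Longrightarrow> a \<noteq> a' \<Longrightarrow> f a = f a' \<Longrightarrow> a = c \<or> a = Suc c"
  proof -
    fix a a' assume a: "a \<in> {1..Suc m}" and a': "a' \<in> {1..Suc m}" and ne: "a \<noteq> a'" and e: "f a = f a'"
    have "(if a \<le> c then a else a - 1) = (if a' \<le> c then a' else a' - 1)"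
      using hd[OF a] hd[OF a'] e by simp
    thus "a = c \<or> a = Suc c" using ne a a' by (auto split: if_splits)
  qed
  have card2: "card {a \<in> {1..Suc m}. f a = f c} = 2"
  proof -
    have "{a \<in> {1..Suc m}. f a = f c} = {c, Suc c}"
    proof
      show "{c, Suc c} \<subseteq> {a \<in> {1..Suc m}. f a = f c}" using c fc by auto
      show "{a \<in> {1..Suc m}. f a = f c} \<subseteq> {c, Suc c}"
      proof
        fix a assume "a \<in> {a \<in> {1..Suc m}. f a = f c}"
        hence a: "a \<in> {1..Suc m}" "f a = f c" by auto
        show "a \<in> {c, Suc c}"
        proof (cases "a = c")
          case False thus ?thesis using key[OF a(1) _ False a(2)] c by auto
        qed simp
      qed
    qed
    thus ?thesis by simp
  qed
  show ?thesis
  proof (rule ex1I[where a = "cluster n (f c)"])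
    have "c \<in> {1..Suc m}" using c by auto
    hence fcp: "f c \<in> perms m" by (rule fperm)
    show "cluster n (f c) \<in> clusters n \<and> num_edges n (cluster n (f c)) Y = 2"
      using fcp card2 edges_eq[OF fcp t] by (simp add: clusters_def n Y f_def)
  next
    fix X assume X: "X \<in> clusters n \<and> num_edges n X Y = 2"
    then obtain s where s: "s \<in> perms m" and Xs: "X = cluster n s" by (auto simp: clusters_def n)
    have "card {a \<in> {1..Suc m}. f a = s} = 2" using X edges_eq[OF s t] by (simp add: Xs Y n f_def)
    then obtain a a' where aa: "{a \<in> {1..Suc m}. f a = s} = {a, a'}" "a \<noteq> a'" by (auto simp: card_2_iff)
    hence a: "a \<in> {1..Suc m}" "f a = s" and a': "a' \<in> {1..Suc m}" "f a' = s" by blast+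
    have "a = c \<or> a = Suc c" using key[OF a(1) a'(1) aa(2)] a a' by simp
    hence "s = f c" using a fc by auto
    thus "X = cluster n (f c)" using Xs by simp
  qed
qed

end
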